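(* Let $\alpha\in[0,1]$, $\kappa_{rg}\in[0,1)$, $\kappa_{rs}>0$. Suppose that at iteration $k$ a step $s_k\neq 0$, a symmetric matrix $M_k$ and a residual $r_k$ satisfy $(H_k+M_k)s_k=-g_k+r_k$ with $\|r_k\|\le\min[\kappa_{rg}\|g_k\|,\kappa_{rs}\|M_ks_k\|]$, $M_k\succeq0$ and $H_k+M_k\succeq 0$, and moreover $$\lambda_{\min}(M_k)\le\bar\kappa_\lambda\|s_k\|^\alpha$$ for some constant $\bar\kappa_\lambda>1$. Then $$\lambda_{\min}(H_k)+\lambda_{\min}(M_k)\le\kappa_\lambda\max\{|\lambda_{\min}(H_k)|,\|g_k\|^{\alpha/(1+\alpha)}\}\quad\text{with }\kappa_\lambda=2\bar\kappa_\lambda^{1/(1+\alpha)}(1+\kappa_{rg}).$$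
   Context: $f:\mathbb{R}^n\to\mathbb{R}$ is twice continuously differentiable, $g_k=\nabla f(x_k)$, $H_k=\nabla^2 f(x_k)$. $\|\cdot\|$ is the Euclidean norm, $\lambda_{\min}$ the leftmost eigenvalue of a symmetric matrix, $M\succeq0$ means positive semidefinite. *)

theory Defs
  imports "HOL-Analysis.Analysis"
begin

definition sym_mat :: "real^'n^'n \<Rightarrow> bool" where
  "sym_mat A \<longleftrightarrow> transpose A = A"

definition psd :: "real^'n^'n \<Rightarrow> bool" where
  "psd A \<longleftrightarrow> sym_mat A \<and> (\<forall>x. 0 \<le> x \<bullet> (A *v x))"

definition lambda_min :: "real^'n^'n \<Rightarrow> real" where
  "lambda_min A = Inf {l. \<exists>v. v \<noteq> 0 \<and> A *v v = l *\<^sub>R v}"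

end

theory Submission imports Defs begin


lemma sym_dot:
  assumes "sym_mat A" shows "x \<bullet> (A *v y) = (A *v x) \<bullet> y"
proof -
  have "A *v x = x v* A" using assms unfolding sym_mat_def
    by (metis vector_transpose_matrix)
  then show ?thesis by (simp add: dot_lmul_matrix)
qed

lemma rayleigh:
  fixes A :: "real^'n^'n"
  assumes "sym_mat A"
  shows "lambda_min A * (x \<bullet> x) \<le> x \<bullet> (A *v x)"
proof -
  define q where "q y = y \<bullet> (A *v y)" for y :: "real^'n"
  have cq: "continuous_on (sphere 0 1) q" unfolding q_def
    by (intro continuous_intros linear_continuous_on bounded_linear_inner_right matrix_vector_mul_bounded_linear)
  have ne: "sphere (0::real^'n) 1 \<noteq> {}" by simp
  obtain u where u: "u \<in> sphere 0 1" and umin: "\<And>y. y \<in> sphere 0 1 \<Longrightarrow> q u \<le> q y"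
    using continuous_attains_inf[OF compact_sphere ne cq] by blast
  define \<mu> where "\<mu> = q u"
  have qs: "q (c *\<^sub>R y) = c^2 * q y" for c y
    by (simp add: q_def matrix_vector_mult_scaleR power2_eq_square)
  have ge: "\<mu> * (y \<bullet> y) \<le> q y" for y
  proof (cases "y = 0")
    case True then show ?thesis by (simp add: q_def)
  next
    case False
    have n: "norm y > 0" using False by simp
    have "(inverse (norm y)) *\<^sub>R y \<in> sphere 0 1" using n by simp
    then have "\<mu> \<le> q ((inverse (norm y)) *\<^sub>R y)" using umin \<mu>_def by blast
    also have "\<dots> = q y / (norm y)^2" by (simp add: qs power_inverse divide_inverse_commute)
    finally have "\<mu> * (norm y)^2 \<le> q y" using n by (simp add: field_simps)
    then show ?thesis by (simp add: power2_norm_eq_inner)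
  qed
  define f where "f y = q y - \<mu> * (y \<bullet> y)" for y
  have f0: "f y \<ge> 0" for y using ge[of y] by (simp add: f_def)
  have fu: "f u = 0" using u by (simp add: f_def \<mu>_def inner_commute power2_norm_eq_inner[symmetric])
  define w where "w = A *v u - \<mu> *\<^sub>R u"
  have fexp: "f (u + t *\<^sub>R w) = f u + 2 * t * (w \<bullet> w) + t^2 * f w" for t
  proof -
    have s1: "u \<bullet> (A *v w) = (A *v u) \<bullet> w" by (rule sym_dot[OF assms])
    have "w \<bullet> w = (A *v u) \<bullet> w - \<mu> * (u \<bullet> w)" by (simp add: w_def inner_diff_left)
    then have e: "w \<bullet> (A *v u) = w \<bullet> w + \<mu> * (u \<bullet> w)" by (simp add: inner_commute)
    show ?thesis using s1 e
      by (simp add: f_def q_def algebra_simps inner_add_left inner_add_right power2_eq_square inner_commute)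
  qed
  have w0: "w \<bullet> w = 0"
  proof (rule ccontr)
    assume "w \<bullet> w \<noteq> 0"
    then have wp: "w \<bullet> w > 0" by (simp add: order_less_le)
    define t where "t = - (w \<bullet> w) / (f w + 1)"
    have fp: "f w + 1 > 0" using f0[of w] by simp
    have "0 \<le> f (u + t *\<^sub>R w)" by (rule f0)
    also have "\<dots> = t * (2 * (w \<bullet> w) + t * f w)" using fexp fu by (simp add: power2_eq_square algebra_simps)
    finally have A: "0 \<le> t * (2 * (w \<bullet> w) + t * f w)" .
    have tn: "t < 0" using wp fp by (simp add: t_def)
    have "- t * f w < w \<bullet> w" using wp fp f0[of w] by (simp add: t_def field_simps)
    then have "2 * (w \<bullet> w) + t * f w > 0" using wp by linarith
    then show False using A tn by (simp add: mult_less_0_iff zero_le_mult_iff)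
  qed
  then have eig: "A *v u = \<mu> *\<^sub>R u" by (simp add: w_def)
  have u0: "u \<noteq> 0" using u by auto
  have mem: "\<mu> \<in> {l. \<exists>v. v \<noteq> 0 \<and> A *v v = l *\<^sub>R v}" using eig u0 by blast
  have bdd: "bdd_below {l. \<exists>v. v \<noteq> 0 \<and> A *v v = l *\<^sub>R v}"
  proof (rule bdd_belowI[of _ \<mu>])
    fix l assume "l \<in> {l. \<exists>v. v \<noteq> 0 \<and> A *v v = l *\<^sub>R v}"
    then obtain v where v: "v \<noteq> 0" "A *v v = l *\<^sub>R v" by blast
    have "\<mu> * (v \<bullet> v) \<le> l * (v \<bullet> v)" using ge[of v] v by (simp add: q_def)
    moreover have "v \<bullet> v > 0" using v by simp
    ultimately show "\<mu> \<le> l" by simp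
  qed
  have "lambda_min A \<le> \<mu>" unfolding lambda_min_def by (rule cInf_lower[OF mem bdd])
  moreover have "x \<bullet> x \<ge> 0" by simp
  ultimately have "lambda_min A * (x \<bullet> x) \<le> \<mu> * (x \<bullet> x)" by (rule mult_right_mono)
  also have "\<dots> \<le> x \<bullet> (A *v x)" using ge[of x] by (simp add: q_def)
  finally show ?thesis .
qed


theorem lemma2p2:
  fixes H M :: "real^'n^'n" and g s r :: "real^'n"
    and \<alpha> \<kappa>rg \<kappa>rs \<kappa>lbar :: real
  assumes "0 \<le> \<alpha>" "\<alpha> \<le> 1"
    and "0 \<le> \<kappa>rg" "\<kappa>rg < 1" "0 < \<kappa>rs"
    and "sym_mat H"
    and "s \<noteq> 0" "sym_mat M"
    and "(H + M) *v s = - g + r"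
    and "norm r \<le> min (\<kappa>rg * norm g) (\<kappa>rs * norm (M *v s))"
    and "psd M" "psd (H + M)"
    and "\<kappa>lbar > 1"
    and "lambda_min M \<le> \<kappa>lbar * norm s powr \<alpha>"
  shows "lambda_min H + lambda_min M
     \<le> (2 * \<kappa>lbar powr (1 / (1 + \<alpha>)) * (1 + \<kappa>rg))
        * max \<bar>lambda_min H\<bar> (norm g powr (\<alpha> / (1 + \<alpha>)))"
proof -
  define lH where "lH = lambda_min H"
  define lM where "lM = lambda_min M"
  define t where "t = lH + lM"
  define c where "c = 1 + \<kappa>rg"
  define K where "K = \<kappa>lbar"
  define G where "G = norm g"
  define p where "p = 1 / (1 + \<alpha>)"
  define m where "m = max \<bar>lH\<bar> (G powr (\<alpha> / (1 + \<alpha>)))"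
  have c1: "c \<ge> 1" using assms by (simp add: c_def)
  have K1: "K > 1" using assms by (simp add: K_def)
  have pp: "p > 0" "p \<le> 1" using assms by (auto simp: p_def field_simps)
  have Kp: "K powr p \<ge> 1" using K1 pp by (simp add: ge_one_powr_ge_zero)
  have m0: "m \<ge> \<bar>lH\<bar>" "m \<ge> G powr (\<alpha> / (1 + \<alpha>))" by (auto simp: m_def)
  have goal: "t \<le> (2 * K powr p * c) * m"
  proof (cases "t \<le> 0")
    case True
    have "0 \<le> (2 * K powr p * c) * m" using Kp c1 m0 by (intro mult_nonneg_nonneg) auto
    then show ?thesis using True by linarith
  next
    case False
    then have tp: "t > 0" by simp
    define ns where "ns = norm s"
    have nsp: "ns > 0" using assms by (simp add: ns_def)
    have "t * (s \<bullet> s) \<le> s \<bullet> (H *v s) + s \<bullet> (M *v s)"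
      using rayleigh[OF assms(6), of s] rayleigh[OF assms(8), of s] by (simp add: t_def lH_def lM_def algebra_simps)
    also have "\<dots> = s \<bullet> ((H + M) *v s)" by (simp add: matrix_vector_mult_add_rdistrib inner_add_right)
    also have "\<dots> \<le> ns * norm ((H + M) *v s)" unfolding ns_def by (rule norm_cauchy_schwarz)
    also have "norm ((H + M) *v s) \<le> c * G"
    proof -
      have "norm ((H + M) *v s) \<le> norm g + norm r" using assms(9) norm_triangle_ineq[of "-g" r] by simp
      also have "\<dots> \<le> c * G" using assms(10) by (simp add: c_def G_def algebra_simps)
      finally show ?thesis .
    qed
    finally have "t * ns^2 \<le> ns * (c * G)" using nsp
      by (simp add: ns_def power2_norm_eq_inner mult_left_mono)
    then have tns: "t * ns \<le> c * G" using nsp by (simp add: power2_eq_square)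
    have "0 < t * ns" using tp nsp by simp
    then have "0 < c * G" using tns by linarith
    then have Gp: "G > 0" using c1 by (simp add: zero_less_mult_iff)
    have nsb: "ns \<le> c * G / t" using tns tp by (simp add: field_simps)
    have lMb: "lM \<le> K * (c * G / t) powr \<alpha>"
    proof -
      have "ns powr \<alpha> \<le> (c * G / t) powr \<alpha>" using nsb nsp assms(1) by (intro powr_mono2) auto
      then have "K * ns powr \<alpha> \<le> K * (c * G / t) powr \<alpha>" using K1 by (simp add: mult_left_mono)
      then show ?thesis using assms(14) unfolding lM_def K_def ns_def by linarith
    qed
    show ?thesis
    proof (cases "t \<le> 2 * \<bar>lH\<bar>")
      case True
      have "2 * \<bar>lH\<bar> \<le> (2 * K powr p * c) * \<bar>lH\<bar>"
      proof -
        have "1 * 1 \<le> K powr p * c" using Kp c1 by (intro mult_mono) auto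
        then have "2 \<le> 2 * K powr p * c" by simp
        then show ?thesis by (intro mult_right_mono) auto
      qed
      also have "\<dots> \<le> (2 * K powr p * c) * m" using m0 Kp c1 by (intro mult_left_mono) auto
      finally show ?thesis using True by linarith
    next
      case False
      then have "2 * lH < lH + lM" using abs_ge_self[of lH] unfolding t_def by linarith
      then have "lM > t / 2" unfolding t_def by (simp add: field_simps)
      moreover have "lM \<le> K * ((c * G) powr \<alpha> / t powr \<alpha>)" using lMb tp Gp c1
        by (simp add: powr_divide)
      ultimately have "t / 2 < K * ((c * G) powr \<alpha> / t powr \<alpha>)" by linarith
      then have "t * t powr \<alpha> < 2 * K * (c * G) powr \<alpha>" using tp
        by (simp add: field_simps)
      moreover have "t * t powr \<alpha> = t powr (1 + \<alpha>)" using tp by (simp add: powr_add)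
      ultimately have lt: "t powr (1 + \<alpha>) < 2 * K * (c * G) powr \<alpha>" by simp
      have "t = (t powr (1 + \<alpha>)) powr p" using tp assms(1) by (simp add: powr_powr p_def)
      also have "\<dots> < (2 * K * (c * G) powr \<alpha>) powr p" using lt pp tp by (intro powr_less_mono2) auto
      also have "\<dots> = 2 powr p * K powr p * c powr (\<alpha> / (1 + \<alpha>)) * G powr (\<alpha> / (1 + \<alpha>))"
        using K1 c1 Gp by (simp add: powr_mult powr_powr p_def)
      also have "\<dots> \<le> 2 * K powr p * c * G powr (\<alpha> / (1 + \<alpha>))"
      proof -
        have a: "2 powr p \<le> 2" using pp powr_mono[of p 1 2] by simp
        have b: "c powr (\<alpha> / (1 + \<alpha>)) \<le> c" using c1 assms(1) powr_mono[of "\<alpha> / (1 + \<alpha>)" 1 c] by simp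
        have "2 powr p * K powr p * c powr (\<alpha> / (1 + \<alpha>)) \<le> 2 * K powr p * c"
          using a b Kp by (intro mult_mono) auto
        then show ?thesis by (intro mult_right_mono) auto
      qed
      also have "\<dots> \<le> (2 * K powr p * c) * m" using m0 Kp c1 by (intro mult_left_mono) auto
      finally show ?thesis by simp
    qed
  qed
  then show ?thesis by (simp add: t_def lH_def lM_def c_def K_def G_def p_def m_def)
qed

end
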